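(* Let $\Omega$ be a topological space and suppose that for every space $\Omega'$ homeomorphic to $\Omega$ a family $\mathcal{K}(\Omega')$ of subsets of $\Omega'$ is given such that: (AX1) if $\Omega_1\cong\Omega_2\cong\Omega$ and $h\colon\Omega_1\to\Omega_2$ is a homeomorphism, then for every $A\subset\Omega_1$, $A\in\mathcal{K}(\Omega_1)$ iff $h(A)\in\mathcal{K}(\Omega_2)$; (AX2) if $K_1,K_2\in\mathcal{K}(\Omega)$ and $K_1\cong K_2$, then there is a homeomorphism of $\Omega$ onto $\Omega$ mapping $K_1$ onto $K_2$. Suppose further that for all $K,L\in\mathcal{K}(\Omega)$ and $f\in\mathcal{C}(K,L)$ there are given a topological space $\Lambda(K)$, a map $\Lambda(f)\in\mathcal{C}(\Lambda(K),\Lambda(L))$ and a topological embedding $\delta_K\colon K\to\Lambda(K)$ such that: ($\Lambda$1) $\Lambda(\mathrm{id}_K)=\mathrm{id}_{\Lambda(K)}$ and $\Lambda(g\circ f)=\Lambda(g)\circ\Lambda(f)$ whenever the composition makes sense; ($\Lambda$2) $\Lambda(K)\cong\Omega$ and $\delta_K(K)\in\mathcal{K}(\Lambda(K))$ for each $K\in\mathcal{K}(\Omega)$; ($\Lambda$3) $\Lambda(f)\circ\delta_K=\delta_L\circ f$ for all $K,L\in\mathcal{K}(\Omega)$, $f\in\mathcal{C}(K,L)$. Then there is an assignment, defined for all $K,L\in\mathcal{K}(\Omega)$ and $\varphi\in\mathcal{C}(K,L)$, $(\varphi,L)\mapsto\widehat{\varphi}_L\in\mathcal{C}(\Omega,\Omega)$,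 such that $\widehat{\varphi}_L$ extends $\varphi$, $\widehat{\mathrm{id}_L}_L=\mathrm{id}_\Omega$ and $\widehat{(\psi\circ\varphi)}_M=\widehat\psi_M\circ\widehat\varphi_L$ for $\psi\in\mathcal{C}(L,M)$, $M\in\mathcal{K}(\Omega)$. If moreover $\Omega$ is metrizable and for each $K\in\mathcal{K}(\Omega)$ there is an assignment $\operatorname{Metr}(K)\ni d\mapsto\Lambda(d)\in\operatorname{Metr}(\Lambda(K))$ such that ($\Lambda$4) $d(x,y)=\Lambda(d)(\delta_K(x),\delta_K(y))$ for $x,y\in K$, and ($\Lambda$5) for all $K,L\in\mathcal{K}(\Omega)$ and $\varrho\in\operatorname{Metr}(L)$ the map $(\mathcal{C}(K,L),\varrho_{\sup})\ni\psi\mapsto\Lambda(\psi)\in(\mathcal{C}(\Lambda(K),\Lambda(L)),\Lambda(\varrho)_{\sup})$ is isometric, then for every $L\in\mathcal{K}(\Omega)$ and $d\in\operatorname{Metr}(L)$ there is $\widehat d\in\operatorname{Metr}(\Omega)$ extending $d$ such that for every $K\in\mathcal{K}(\Omega)$ the map $(\mathcal{C}(K,L),d_{\sup})\ni\varphi\mapsto\widehat\varphi_L\in(\mathcal{C}(\Omega,\Omega),\widehat d_{\sup})$ is isometric.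
   Context: $\mathcal{C}(X,Y)$ denotes the set of continuous maps $X\to Y$; $\operatorname{Metr}(X)$ denotes the set of all compatible (i.e. inducing the topology) bounded metrics on a metrizable space $X$; for a metric $d$ on $Y$, $d_{\sup}(f,g)=\sup_x d(f(x),g(x))$. *)

theory Defs
  imports "HOL-Analysis.Analysis"
begin

text \<open>C(K,L) for subsets K, L of the space Om (with subspace topologies);
  maps are represented extensionally (value undefined outside K), so that
  HOL functions correspond exactly to set-theoretic maps K -> L.\<close>
definition cmaps :: "'a topology \<Rightarrow> 'a set \<Rightarrow> 'a set \<Rightarrow> ('a \<Rightarrow> 'a) set" where
  "cmaps Om K L = {f. continuous_map (subtopology Om K) (subtopology Om L) f \<and> f \<in> extensional K}"

definition Metr :: "'a topology \<Rightarrow> ('a \<Rightarrow> 'a \<Rightarrow> real) set" where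
  "Metr X = {d. Metric_space (topspace X) d
              \<and> Metric_space.mtopology (topspace X) d = X
              \<and> (\<exists>B. \<forall>x\<in>topspace X. \<forall>y\<in>topspace X. d x y \<le> B)}"

definition sup_dist :: "('b \<Rightarrow> 'b \<Rightarrow> real) \<Rightarrow> 'a set \<Rightarrow> ('a \<Rightarrow> 'b) \<Rightarrow> ('a \<Rightarrow> 'b) \<Rightarrow> real" where
  "sup_dist d S f g = (if S = {} then 0 else (SUP x\<in>S. d (f x) (g x)))"

end

theory Submission
  imports Defs
begin

lemma Metr_pullback:
  assumes rho: "rho \<in> Metr Y" and hm: "homeomorphic_maps X Y H G"
  shows "(\<lambda>x y. rho (H x) (H y)) \<in> Metr X"
proof -
  have MY: "Metric_space (topspace Y) rho" and TY: "Metric_space.mtopology (topspace Y) rho = Y"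
    and BY: "\<exists>B. \<forall>x\<in>topspace Y. \<forall>y\<in>topspace Y. rho x y \<le> B"
    using rho by (auto simp: Metr_def)
  have Hin: "\<And>x. x \<in> topspace X \<Longrightarrow> H x \<in> topspace Y" and GH: "\<And>x. x \<in> topspace X \<Longrightarrow> G (H x) = x"
    using hm by (auto simp: homeomorphic_maps_def continuous_map_def)
  have hmap: "homeomorphic_map X Y H" using hm homeomorphic_maps_imp_map by blast
  have surj: "H ` topspace X = topspace Y" using hmap homeomorphic_imp_surjective_map by blast
  define dh where "dh = (\<lambda>x y. rho (H x) (H y))"
  have MX: "Metric_space (topspace X) dh"
  proof
    fix x y z
    show "0 \<le> dh x y" using MY by (simp add: dh_def Metric_space.nonneg)
    show "dh x y = dh y x" using MY by (simp add: dh_def Metric_space.commute)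
    show "x \<in> topspace X \<Longrightarrow> y \<in> topspace X \<Longrightarrow> (dh x y = 0) = (x = y)"
      using MY Hin GH unfolding dh_def by (metis Metric_space.zero)
    show "x \<in> topspace X \<Longrightarrow> y \<in> topspace X \<Longrightarrow> z \<in> topspace X \<Longrightarrow> dh x z \<le> dh x y + dh y z"
      using MY Hin unfolding dh_def by (meson Metric_space.triangle)
  qed
  have M12: "Metric_space12 (topspace X) dh (topspace Y) rho"
    using MX MY by (simp add: Metric_space12_def)
  have hm2: "homeomorphic_map (Metric_space.mtopology (topspace X) dh) Y H"
    using Metric_space12.isometry_imp_homeomorphic_map[OF M12 surj] TY by (simp add: dh_def)
  have top: "topspace (Metric_space.mtopology (topspace X) dh) = topspace X"
    using MX Metric_space.topspace_mtopology by blast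
  have "Metric_space.mtopology (topspace X) dh = X"
    unfolding topology_eq
  proof
    fix S
    show "openin (Metric_space.mtopology (topspace X) dh) S = openin X S"
    proof (cases "S \<subseteq> topspace X")
      case True
      then show ?thesis using homeomorphic_map_openness[OF hm2] homeomorphic_map_openness[OF hmap] top by metis
    next
      case False
      then show ?thesis using openin_subset top by metis
    qed
  qed
  moreover have "\<exists>B. \<forall>x\<in>topspace X. \<forall>y\<in>topspace X. dh x y \<le> B"
    using BY Hin unfolding dh_def by meson
  ultimately show ?thesis using MX by (simp add: Metr_def dh_def)
qed


lemma cmaps_into:
  assumes "f \<in> cmaps Om K L" "x \<in> topspace Om" "x \<in> K"
  shows "f x \<in> L \<and> f x \<in> topspace Om"
  using assms by (auto simp: cmaps_def continuous_map_def)

theorem mainTheorem2: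
  fixes Om :: "'a topology"
    and KK :: "'a topology \<Rightarrow> 'a set set"
    and LamT :: "'a set \<Rightarrow> 'a topology"
    and LamM :: "'a set \<Rightarrow> 'a set \<Rightarrow> ('a \<Rightarrow> 'a) \<Rightarrow> ('a \<Rightarrow> 'a)"
    and delta :: "'a set \<Rightarrow> 'a \<Rightarrow> 'a"
  assumes KK_sub: "\<And>Om'. Om' homeomorphic_space Om \<Longrightarrow> KK Om' \<subseteq> Pow (topspace Om')"
    and AX1: "\<And>Om1 Om2 h A. Om1 homeomorphic_space Om \<Longrightarrow> Om2 homeomorphic_space Om \<Longrightarrow>
              homeomorphic_map Om1 Om2 h \<Longrightarrow> A \<subseteq> topspace Om1 \<Longrightarrow>
              (A \<in> KK Om1 \<longleftrightarrow> h ` A \<in> KK Om2)"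
    and AX2: "\<And>K1 K2. K1 \<in> KK Om \<Longrightarrow> K2 \<in> KK Om \<Longrightarrow>
              subtopology Om K1 homeomorphic_space subtopology Om K2 \<Longrightarrow>
              \<exists>h. homeomorphic_map Om Om h \<and> h ` K1 = K2"
    and Lam_cont: "\<And>K L f. K \<in> KK Om \<Longrightarrow> L \<in> KK Om \<Longrightarrow> f \<in> cmaps Om K L \<Longrightarrow>
              continuous_map (LamT K) (LamT L) (LamM K L f)"
    and delta_emb: "\<And>K. K \<in> KK Om \<Longrightarrow> embedding_map (subtopology Om K) (LamT K) (delta K)"
    and Lam1_id: "\<And>K x. K \<in> KK Om \<Longrightarrow> x \<in> topspace (LamT K) \<Longrightarrow>
              LamM K K (restrict id K) x = x"
    and Lam1_comp: "\<And>K L M f g x. K \<in> KK Om \<Longrightarrow> L \<in> KK Om \<Longrightarrow> M \<in> KK Om \<Longrightarrow>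
              f \<in> cmaps Om K L \<Longrightarrow> g \<in> cmaps Om L M \<Longrightarrow> x \<in> topspace (LamT K) \<Longrightarrow>
              LamM K M (restrict (g \<circ> f) K) x = LamM L M g (LamM K L f x)"
    and Lam2: "\<And>K. K \<in> KK Om \<Longrightarrow>
              LamT K homeomorphic_space Om \<and> delta K ` K \<in> KK (LamT K)"
    and Lam3: "\<And>K L f x. K \<in> KK Om \<Longrightarrow> L \<in> KK Om \<Longrightarrow> f \<in> cmaps Om K L \<Longrightarrow> x \<in> K \<Longrightarrow>
              LamM K L f (delta K x) = delta L (f x)"
  shows "\<exists>hat :: 'a set \<Rightarrow> 'a set \<Rightarrow> ('a \<Rightarrow> 'a) \<Rightarrow> ('a \<Rightarrow> 'a).
     (\<forall>K\<in>KK Om. \<forall>L\<in>KK Om. \<forall>\<phi>\<in>cmaps Om K L.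
         continuous_map Om Om (hat K L \<phi>) \<and> (\<forall>x\<in>K. hat K L \<phi> x = \<phi> x))
   \<and> (\<forall>L\<in>KK Om. \<forall>x\<in>topspace Om. hat L L (restrict id L) x = x)
   \<and> (\<forall>K\<in>KK Om. \<forall>L\<in>KK Om. \<forall>M\<in>KK Om. \<forall>\<phi>\<in>cmaps Om K L. \<forall>\<psi>\<in>cmaps Om L M.
         \<forall>x\<in>topspace Om. hat K M (restrict (\<psi> \<circ> \<phi>) K) x = hat L M \<psi> (hat K L \<phi> x))
   \<and> (\<forall>LamD :: 'a set \<Rightarrow> ('a \<Rightarrow> 'a \<Rightarrow> real) \<Rightarrow> ('a \<Rightarrow> 'a \<Rightarrow> real).
        metrizable_space Om
        \<and> (\<forall>K\<in>KK Om. \<forall>d\<in>Metr (subtopology Om K). LamD K d \<in> Metr (LamT K))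
        \<and> (\<forall>K\<in>KK Om. \<forall>d\<in>Metr (subtopology Om K). \<forall>x\<in>K. \<forall>y\<in>K.
              d x y = LamD K d (delta K x) (delta K y))
        \<and> (\<forall>K\<in>KK Om. \<forall>L\<in>KK Om. \<forall>\<rho>\<in>Metr (subtopology Om L).
              \<forall>\<psi>\<in>cmaps Om K L. \<forall>\<psi>'\<in>cmaps Om K L.
                sup_dist (LamD L \<rho>) (topspace (LamT K)) (LamM K L \<psi>) (LamM K L \<psi>')
                  = sup_dist \<rho> K \<psi> \<psi>')
        \<longrightarrow> (\<forall>L\<in>KK Om. \<forall>d\<in>Metr (subtopology Om L).
              \<exists>dh\<in>Metr Om. (\<forall>x\<in>L. \<forall>y\<in>L. dh x y = d x y)
                \<and> (\<forall>K\<in>KK Om. \<forall>\<phi>\<in>cmaps Om K L. \<forall>\<phi>'\<in>cmaps Om K L.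
                     sup_dist dh (topspace Om) (hat K L \<phi>) (hat K L \<phi>')
                       = sup_dist d K \<phi> \<phi>')))"
proof -
  have KKs: "\<And>K. K \<in> KK Om \<Longrightarrow> K \<subseteq> topspace Om" using KK_sub[OF homeomorphic_space_refl] by blast
  have ex: "\<exists>p. homeomorphic_maps Om (LamT L) (fst p) (snd p) \<and> (\<forall>x\<in>L. fst p x = delta L x)"
    if L: "L \<in> KK Om" for L
  proof -
    have Ls: "L \<subseteq> topspace Om" using KKs L .
    have hsp: "LamT L homeomorphic_space Om" and dK: "delta L ` L \<in> KK (LamT L)" using Lam2[OF L] by auto
    then obtain h h' where hh: "homeomorphic_maps (LamT L) Om h h'" unfolding homeomorphic_space_def by blast
    have emb: "embedding_map (subtopology Om L) (LamT L) (delta L)" using delta_emb[OF L] .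
    have tL0: "topspace (subtopology Om L) = L" using Ls by auto
    have F: "delta L ` L = topspace (subtopology (LamT L) (delta L ` L))"
      using homeomorphic_imp_surjective_map[OF emb[unfolded embedding_map_def]] unfolding tL0 .
    have tsub: "topspace (subtopology (LamT L) (delta L ` L)) \<subseteq> topspace (LamT L)" by simp
    have dsub: "delta L ` L \<subseteq> topspace (LamT L)" using ord_eq_le_trans[OF F tsub] .
    define e where "e = h \<circ> delta L"
    define L' where "L' = e ` L"
    have L'eq: "L' = h ` (delta L ` L)" by (simp add: L'_def e_def image_comp)
    have L'K: "L' \<in> KK Om"
      using AX1[OF hsp homeomorphic_space_refl homeomorphic_maps_imp_map[OF hh] dsub] dK L'eq by simp
    have L's: "L' \<subseteq> topspace Om" using KKs L'K .
    have "embedding_map (LamT L) Om h"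
      using homeomorphic_maps_imp_map[OF hh] surjective_embedding_map by blast
    then have "embedding_map (subtopology Om L) Om e"
      unfolding e_def using embedding_map_compose emb by blast
    then have "homeomorphic_map (subtopology Om L) (subtopology Om L') e"
      unfolding embedding_map_def L'_def using Ls by (simp add: Int_absorb1)
    then obtain e' where ee: "homeomorphic_maps (subtopology Om L) (subtopology Om L') e e'"
      using homeomorphic_map_maps by blast
    then have "subtopology Om L homeomorphic_space subtopology Om L'"
      using homeomorphic_space_def by blast
    then obtain g where g: "homeomorphic_map Om Om g" and gL: "g ` L = L'"
      using AX2[OF L L'K] by blast
    then obtain g' where gg: "homeomorphic_maps Om Om g g'" using homeomorphic_map_maps by blast
    have gsub: "homeomorphic_maps (subtopology Om L) (subtopology Om L') g g'"
      using homeomorphic_maps_subtopologies[OF gg] gL Ls L's by (simp add: Int_absorb1)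
    have tL: "topspace (subtopology Om L) = L" using Ls by auto
    have tL': "topspace (subtopology Om L') = L'" using L's by auto
    define u where "u = restrict (e' \<circ> g) L"
    define v where "v = restrict (g' \<circ> e) L"
    have cu: "continuous_map (subtopology Om L) (subtopology Om L) (e' \<circ> g)"
      using gsub ee by (meson continuous_map_compose homeomorphic_maps_def)
    have cv: "continuous_map (subtopology Om L) (subtopology Om L) (g' \<circ> e)"
      using gsub ee by (meson continuous_map_compose homeomorphic_maps_def)
    have uC: "u \<in> cmaps Om L L" unfolding cmaps_def u_def
      using continuous_map_eq[OF cu, of "restrict (e' \<circ> g) L"] tL by auto
    have vC: "v \<in> cmaps Om L L" unfolding cmaps_def v_def
      using continuous_map_eq[OF cv, of "restrict (g' \<circ> e) L"] tL by auto
    have eIn: "e x \<in> L'" and e'e: "e' (e x) = x" if "x \<in> L" for x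
      using ee that tL tL' unfolding homeomorphic_maps_def continuous_map_def by auto
    have e'In: "e' y \<in> L" and ee': "e (e' y) = y" if "y \<in> L'" for y
      using ee that tL tL' unfolding homeomorphic_maps_def continuous_map_def by auto
    have gIn: "g x \<in> L'" and g'g: "g' (g x) = x" if "x \<in> L" for x
      using gsub that tL tL' unfolding homeomorphic_maps_def continuous_map_def by auto
    have g'In: "g' y \<in> L" and gg': "g (g' y) = y" if "y \<in> L'" for y
      using gsub that tL tL' unfolding homeomorphic_maps_def continuous_map_def by auto
    have uv: "restrict (u \<circ> v) L = restrict id L"
      by (rule ext) (simp add: u_def v_def eIn g'In gg' e'e)
    have vu: "restrict (v \<circ> u) L = restrict id L"
      by (rule ext) (simp add: u_def v_def gIn e'In ee' g'g)
    have Luv: "LamM L L u (LamM L L v z) = z" if "z \<in> topspace (LamT L)" for z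
      using Lam1_comp[OF L L L vC uC that] uv Lam1_id[OF L that] by simp
    have Lvu: "LamM L L v (LamM L L u z) = z" if "z \<in> topspace (LamT L)" for z
      using Lam1_comp[OF L L L uC vC that] vu Lam1_id[OF L that] by simp
    have cLu: "continuous_map (LamT L) (LamT L) (LamM L L u)" using Lam_cont[OF L L uC] .
    have cLv: "continuous_map (LamT L) (LamT L) (LamM L L v)" using Lam_cont[OF L L vC] .
    have chh: "continuous_map (LamT L) Om h" "continuous_map Om (LamT L) h'"
      "\<And>x. x \<in> topspace (LamT L) \<Longrightarrow> h' (h x) = x" "\<And>y. y \<in> topspace Om \<Longrightarrow> h (h' y) = y"
      using hh unfolding homeomorphic_maps_def by auto
    have cgg: "continuous_map Om Om g" "continuous_map Om Om g'"
      "\<And>x. x \<in> topspace Om \<Longrightarrow> g' (g x) = x" "\<And>y. y \<in> topspace Om \<Longrightarrow> g (g' y) = y"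
      using gg unfolding homeomorphic_maps_def by auto
    define H where "H = (\<lambda>x. LamM L L v (h' (g x)))"
    define G where "G = (\<lambda>y. g' (h (LamM L L u y)))"
    have "homeomorphic_maps Om (LamT L) H G"
      unfolding homeomorphic_maps_def
    proof (intro conjI ballI)
      show "continuous_map Om (LamT L) H" unfolding H_def
        using continuous_map_compose[OF continuous_map_compose[OF cgg(1) chh(2)] cLv] by (simp add: o_def)
      show "continuous_map (LamT L) Om G" unfolding G_def
        using continuous_map_compose[OF continuous_map_compose[OF cLu chh(1)] cgg(2)] by (simp add: o_def)
    next
      fix x assume x: "x \<in> topspace Om"
      have z: "h' (g x) \<in> topspace (LamT L)"
        using x cgg(1) chh(2) by (simp add: continuous_map_def Pi_iff)
      show "G (H x) = x" unfolding G_def H_def using Luv[OF z] chh(4) cgg(3) x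
        using cgg(1) by (simp add: continuous_map_def Pi_iff)
    next
      fix y assume y: "y \<in> topspace (LamT L)"
      have w: "LamM L L u y \<in> topspace (LamT L)" using cLu y by (simp add: continuous_map_def Pi_iff)
      have hw: "h (LamM L L u y) \<in> topspace Om" using chh(1) w by (simp add: continuous_map_def Pi_iff)
      show "H (G y) = y" unfolding G_def H_def using cgg(4)[OF hw] chh(3)[OF w] Lvu[OF y] by simp
    qed
    moreover have "H x = delta L x" if x: "x \<in> L" for x
    proof -
      have ux: "u x \<in> L" using x by (simp add: u_def e'In gIn)
      have "h (delta L (u x)) = g x" using x ee'[OF gIn[OF x]] by (simp add: u_def e_def)
      moreover have "delta L (u x) \<in> topspace (LamT L)" using dsub ux by blast
      ultimately have "h' (g x) = delta L (u x)" using chh(3) by metis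
      then have "H x = LamM L L v (delta L (u x))" by (simp add: H_def)
      also have "\<dots> = delta L (v (u x))" using Lam3[OF L L vC ux] .
      also have "v (u x) = x" using x by (simp add: u_def v_def gIn e'In ee' g'g)
      finally show ?thesis .
    qed
    ultimately show ?thesis by (intro exI[of _ "(H, G)"]) auto
  qed
  define HH where "HH = (\<lambda>L. fst (SOME p. homeomorphic_maps Om (LamT L) (fst p) (snd p) \<and> (\<forall>x\<in>L. fst p x = delta L x)))"
  define GG where "GG = (\<lambda>L. snd (SOME p. homeomorphic_maps Om (LamT L) (fst p) (snd p) \<and> (\<forall>x\<in>L. fst p x = delta L x)))"
  have HG: "homeomorphic_maps Om (LamT L) (HH L) (GG L) \<and> (\<forall>x\<in>L. HH L x = delta L x)" if "L \<in> KK Om" for L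
    unfolding HH_def GG_def using someI_ex[OF ex[OF that]] by blast
  have HGc: "continuous_map Om (LamT L) (HH L)" "continuous_map (LamT L) Om (GG L)"
    "\<And>x. x \<in> topspace Om \<Longrightarrow> GG L (HH L x) = x" "\<And>y. y \<in> topspace (LamT L) \<Longrightarrow> HH L (GG L y) = y"
    "\<And>x. x \<in> L \<Longrightarrow> HH L x = delta L x"
    if "L \<in> KK Om" for L using HG[OF that] unfolding homeomorphic_maps_def by auto
  have HHin: "HH L x \<in> topspace (LamT L)" if "L \<in> KK Om" "x \<in> topspace Om" for L x
    using HGc(1)[OF that(1)] that(2) by (simp add: continuous_map_def Pi_iff)
  have HHsurj: "HH L ` topspace Om = topspace (LamT L)" if "L \<in> KK Om" for L
    using HG[OF that] homeomorphic_maps_imp_map homeomorphic_imp_surjective_map by blast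
  have LMin: "LamM K L f y \<in> topspace (LamT L)"
    if "K \<in> KK Om" "L \<in> KK Om" "f \<in> cmaps Om K L" "y \<in> topspace (LamT K)" for K L f y
    using Lam_cont[OF that(1-3)] that(4) by (simp add: continuous_map_def Pi_iff)
  define hat where "hat = (\<lambda>K L \<phi> x. GG L (LamM K L \<phi> (HH K x)))"
  show ?thesis
  proof (intro exI[of _ hat] conjI ballI allI impI)
    fix K L \<phi> assume K: "K \<in> KK Om" and L: "L \<in> KK Om" and \<phi>: "\<phi> \<in> cmaps Om K L"
    show "continuous_map Om Om (hat K L \<phi>)" unfolding hat_def
      using continuous_map_compose[OF continuous_map_compose[OF HGc(1)[OF K] Lam_cont[OF K L \<phi>]] HGc(2)[OF L]]
      by (simp add: o_def)
  next
    fix K L \<phi> x assume K: "K \<in> KK Om" and L: "L \<in> KK Om" and \<phi>: "\<phi> \<in> cmaps Om K L" and x: "x \<in> K"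
    have xt: "x \<in> topspace Om" using KKs K x by blast
    have fx: "\<phi> x \<in> L" "\<phi> x \<in> topspace Om" using cmaps_into[OF \<phi> xt x] by auto
    show "hat K L \<phi> x = \<phi> x" unfolding hat_def
      using HGc(5)[OF K x] Lam3[OF K L \<phi> x] HGc(5)[OF L fx(1)] HGc(3)[OF L fx(2)] by simp
  next
    fix L x assume L: "L \<in> KK Om" and x: "x \<in> topspace Om"
    show "hat L L (restrict id L) x = x" unfolding hat_def
      using Lam1_id[OF L HHin[OF L x]] HGc(3)[OF L x] by simp
  next
    fix K L M \<phi> \<psi> x assume K: "K \<in> KK Om" and L: "L \<in> KK Om" and M: "M \<in> KK Om"
      and \<phi>: "\<phi> \<in> cmaps Om K L" and \<psi>: "\<psi> \<in> cmaps Om L M" and x: "x \<in> topspace Om"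
    show "hat K M (restrict (\<psi> \<circ> \<phi>) K) x = hat L M \<psi> (hat K L \<phi> x)" unfolding hat_def
      using Lam1_comp[OF K L M \<phi> \<psi> HHin[OF K x]] HGc(4)[OF L LMin[OF K L \<phi> HHin[OF K x]]] by simp
  next
    fix LamD :: "'a set \<Rightarrow> ('a \<Rightarrow> 'a \<Rightarrow> real) \<Rightarrow> ('a \<Rightarrow> 'a \<Rightarrow> real)"
    assume A: "metrizable_space Om
        \<and> (\<forall>K\<in>KK Om. \<forall>d\<in>Metr (subtopology Om K). LamD K d \<in> Metr (LamT K))
        \<and> (\<forall>K\<in>KK Om. \<forall>d\<in>Metr (subtopology Om K). \<forall>x\<in>K. \<forall>y\<in>K.
              d x y = LamD K d (delta K x) (delta K y))
        \<and> (\<forall>K\<in>KK Om. \<forall>L\<in>KK Om. \<forall>\<rho>\<in>Metr (subtopology Om L).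
              \<forall>\<psi>\<in>cmaps Om K L. \<forall>\<psi>'\<in>cmaps Om K L.
                sup_dist (LamD L \<rho>) (topspace (LamT K)) (LamM K L \<psi>) (LamM K L \<psi>')
                  = sup_dist \<rho> K \<psi> \<psi>')"
    note A2 = A[THEN conjunct2, THEN conjunct1]
    note A3 = A[THEN conjunct2, THEN conjunct2, THEN conjunct1]
    note A4 = A[THEN conjunct2, THEN conjunct2, THEN conjunct2]
    fix L d assume L: "L \<in> KK Om" and d: "d \<in> Metr (subtopology Om L)"
    define dh where "dh = (\<lambda>x y. LamD L d (HH L x) (HH L y))"
    show "\<exists>dh\<in>Metr Om. (\<forall>x\<in>L. \<forall>y\<in>L. dh x y = d x y)
                \<and> (\<forall>K\<in>KK Om. \<forall>\<phi>\<in>cmaps Om K L. \<forall>\<phi>'\<in>cmaps Om K L.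
                     sup_dist dh (topspace Om) (hat K L \<phi>) (hat K L \<phi>')
                       = sup_dist d K \<phi> \<phi>')"
    proof (intro bexI[of _ dh] conjI ballI)
      show "dh \<in> Metr Om" unfolding dh_def
      proof (rule Metr_pullback)
        show "LamD L d \<in> Metr (LamT L)" using A2 L d by blast
        show "homeomorphic_maps Om (LamT L) (HH L) (GG L)" using HG[OF L] by blast
      qed
    next
      fix x y assume "x \<in> L" "y \<in> L"
      then show "dh x y = d x y" unfolding dh_def using HGc(5)[OF L] A3[rule_format, OF L d] by simp
    next
      fix K \<phi> \<phi>' assume K: "K \<in> KK Om" and \<phi>: "\<phi> \<in> cmaps Om K L" and \<phi>': "\<phi>' \<in> cmaps Om K L"
      define F where "F = (\<lambda>y. LamD L d (LamM K L \<phi> y) (LamM K L \<phi>' y))"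
      have eq1: "dh (hat K L \<phi> x) (hat K L \<phi>' x) = F (HH K x)" if x: "x \<in> topspace Om" for x
        unfolding dh_def hat_def F_def
        using HGc(4)[OF L LMin[OF K L \<phi> HHin[OF K x]]] HGc(4)[OF L LMin[OF K L \<phi>' HHin[OF K x]]] by simp
      have "sup_dist dh (topspace Om) (hat K L \<phi>) (hat K L \<phi>')
          = sup_dist (LamD L d) (topspace (LamT K)) (LamM K L \<phi>) (LamM K L \<phi>')"
      proof -
        have "(SUP x\<in>topspace Om. dh (hat K L \<phi> x) (hat K L \<phi>' x)) = (SUP x\<in>topspace Om. F (HH K x))"
          using eq1 by (intro SUP_cong) auto
        also have "\<dots> = (SUP y\<in>topspace (LamT K). F y)"
          using HHsurj[OF K] by (metis image_image)
        finally have S: "(SUP x\<in>topspace Om. dh (hat K L \<phi> x) (hat K L \<phi>' x)) = (SUP y\<in>topspace (LamT K). F y)" .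
        have E: "(topspace Om = {}) = (topspace (LamT K) = {})" using HHsurj[OF K] by blast
        show ?thesis unfolding sup_dist_def E by (simp only: S F_def)
      qed
      also have "\<dots> = sup_dist d K \<phi> \<phi>'" using A4[rule_format, OF K L d \<phi> \<phi>'] .
      finally show "sup_dist dh (topspace Om) (hat K L \<phi>) (hat K L \<phi>') = sup_dist d K \<phi> \<phi>'" .
    qed
  qed
qed

end
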